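(* Let $n\ge2$, let $0<f_1\le\dots\le f_n$ and $F_j=\sum_{i=1}^j f_i$. For $k\in\{1,\ldots,n-1\}$ let $X_k=1/(F_{n-k}+Z_k)^2$ where $Z_k\sim\Gamma\big(k,e\binom n2/k\big)$. Then for any $k\in\{3,\ldots,n-1\}$, $$\mathbb{E}[X_k^2]-(\mathbb{E}[X_k])^2\le O\left(\frac{k^3n^{12}F_{n-k}^3+k^9n^6}{n^{16}F_{n-k}^9+k^{16}F_{n-k}}\right),$$ whereas for $k=1$ and $k=2$, $$\mathbb{E}[X_1^2]-(\mathbb{E}[X_1])^2\le O\left(\frac{n^6F_{n-1}^2+n^2}{n^8F_{n-1}^7+F_{n-1}^3}\right),\qquad \mathbb{E}[X_2^2]-(\mathbb{E}[X_2])^2\le O\left(\frac{n^{10}F_{n-2}^3+n^4}{n^{14}F_{n-2}^9+F_{n-2}^2}\right).$$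
   Context: $\Gamma(k,\lambda)$ denotes the distribution of the sum of $k$ independent exponential random variables with rate $\lambda$, i.e. density $\lambda^k x^{k-1}e^{-\lambda x}/(k-1)!$ on $x>0$. *)

theory Defs
  imports "HOL-Probability.Probability"
begin

definition gamma_density :: "nat \<Rightarrow> real \<Rightarrow> real \<Rightarrow> real" where
  "gamma_density k l x = (if x > 0 then l ^ k * x ^ (k - 1) * exp (- l * x) / fact (k - 1) else 0)"

definition gamma_measure :: "nat \<Rightarrow> real \<Rightarrow> real measure" where
  "gamma_measure k l = density lborel (\<lambda>x. ennreal (gamma_density k l x))"

definition Fsum :: "(nat \<Rightarrow> real) \<Rightarrow> nat \<Rightarrow> real" where
  "Fsum f j = (\<Sum>i = 1..j. f i)"

definition rateZ :: "nat \<Rightarrow> nat \<Rightarrow> real" where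
  "rateZ n k = exp 1 * real (n choose 2) / real k"

definition varX :: "nat \<Rightarrow> (nat \<Rightarrow> real) \<Rightarrow> nat \<Rightarrow> real" where
  "varX n f k =
     (\<integral>z. (1 / (Fsum f (n - k) + z) ^ 2) ^ 2 \<partial>gamma_measure k (rateZ n k))
     - (\<integral>z. 1 / (Fsum f (n - k) + z) ^ 2 \<partial>gamma_measure k (rateZ n k)) ^ 2"

end

theory Submission
  imports Defs
begin


lemma gd_nonneg: "0 < l \<Longrightarrow> 0 \<le> gamma_density k l x"
  by (simp add: gamma_density_def)

lemma gd_meas[measurable]: "gamma_density k l \<in> borel_measurable borel"
  unfolding gamma_density_def[abs_def] by measurable

lemma gd_erlang: "1 \<le> k \<Longrightarrow> x \<noteq> 0 \<Longrightarrow> gamma_density k l x = erlang_density (k-1) l x"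
  by (cases k) (auto simp: gamma_density_def erlang_density_def)

lemma nn_gd_moment:
  assumes "1 \<le> k" "0 < l"
  shows "(\<integral>\<^sup>+ x. ennreal (gamma_density k l x * x ^ i) \<partial>lborel) = fact (k - 1 + i) / (fact (k - 1) * l ^ i)"
proof -
  have "(\<integral>\<^sup>+ x. ennreal (gamma_density k l x * x ^ i) \<partial>lborel) =
     (\<integral>\<^sup>+ x. ennreal (erlang_density (k-1) l x * x ^ i) \<partial>lborel)"
    by (intro nn_integral_cong_AE, use AE_lborel_singleton[of 0] in eventually_elim) (use assms gd_erlang in auto)
  also have "\<dots> = fact (k - 1 + i) / (fact (k - 1) * l ^ i)"
    by (rule nn_integral_erlang_ith_moment) (rule assms)
  finally show ?thesis .
qed

lemma hbi_gd_moment: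
  assumes "1 \<le> k" "0 < l"
  shows "has_bochner_integral lborel (\<lambda>x. gamma_density k l x * x ^ i) (fact (k - 1 + i) / (fact (k - 1) * l ^ i))"
proof (rule has_bochner_integral_nn_integral)
  show "AE x in lborel. 0 \<le> gamma_density k l x * x ^ i"
    using assms by (auto simp: gamma_density_def)
  show "0 \<le> fact (k - 1 + i) / (fact (k - 1) * l ^ i)" using assms by simp
qed (use nn_gd_moment[OF assms] in auto)

lemma gd_neg:
  assumes "j < k" "0 < l"
  shows "gamma_density k l x * (1 / x ^ j) = l ^ j * fact (k - 1 - j) / fact (k - 1) * (gamma_density (k - j) l x * x ^ 0)"
proof (cases "x > 0")
  case True
  have e1: "x ^ (k - 1) = x ^ (k - j - 1) * x ^ j" using assms by (simp flip: power_add)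
  have e2: "l ^ k = l ^ j * l ^ (k - j)" using assms by (simp flip: power_add)
  have e3: "k - 1 - j = k - j - 1" by simp
  show ?thesis using True assms unfolding gamma_density_def e1 e2 e3
    by (simp add: field_simps)
qed (simp add: gamma_density_def)

lemma gm_transfer:
  assumes [measurable]: "h \<in> borel_measurable borel" and l: "0 < l"
    and hb: "has_bochner_integral lborel (\<lambda>x. gamma_density k l x * h x) v"
  shows "integrable (gamma_measure k l) h \<and> integral\<^sup>L (gamma_measure k l) h = v"
proof
  have nn: "AE x in lborel. 0 \<le> gamma_density k l x" using l by (simp add: gd_nonneg)
  show "integrable (gamma_measure k l) h"
    unfolding gamma_measure_def using hb
    by (subst integrable_density) (auto simp: nn has_bochner_integral_iff)
  show "integral\<^sup>L (gamma_measure k l) h = v"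
    unfolding gamma_measure_def using hb
    by (subst integral_density) (auto simp: nn has_bochner_integral_iff)
qed

lemma gm_prob: assumes "1 \<le> k" "0 < l" shows "prob_space (gamma_measure k l)"
proof
  show "emeasure (gamma_measure k l) (space (gamma_measure k l)) = 1"
    using nn_gd_moment[OF assms, where i=0] by (simp add: gamma_measure_def emeasure_density)
qed

lemma gm_AE_pos: "AE x in gamma_measure k l. 0 < x"
  unfolding gamma_measure_def
  by (subst AE_density) (auto simp: gamma_density_def)

lemma gm_space: "space (gamma_measure k l) = UNIV"
  by (simp add: gamma_measure_def)

lemma gm_sets: "sets (gamma_measure k l) = sets borel"
  by (simp add: gamma_measure_def)

lemma gm_moment:
  assumes "1 \<le> k" "0 < l"
  shows "integrable (gamma_measure k l) (\<lambda>x. x ^ i) \<and>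
    integral\<^sup>L (gamma_measure k l) (\<lambda>x. x ^ i) = fact (k - 1 + i) / (fact (k - 1) * l ^ i)"
  by (rule gm_transfer[OF _ assms(2) hbi_gd_moment[OF assms]]) auto

lemma gm_negmoment:
  assumes "j < k" "0 < l"
  shows "integrable (gamma_measure k l) (\<lambda>x. 1 / x ^ j) \<and>
    integral\<^sup>L (gamma_measure k l) (\<lambda>x. 1 / x ^ j) = l ^ j * fact (k - 1 - j) / fact (k - 1)"
proof (rule gm_transfer)
  have eq: "(\<lambda>x. gamma_density k l x * (1 / x ^ j)) = (\<lambda>x. l ^ j * fact (k - 1 - j) / fact (k - 1) * (gamma_density (k - j) l x * x ^ 0))"
    by (rule ext) (rule gd_neg[OF assms])
  have "has_bochner_integral lborel (\<lambda>x. l ^ j * fact (k - 1 - j) / fact (k - 1) * (gamma_density (k - j) l x * x ^ 0))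
     (l ^ j * fact (k - 1 - j) / fact (k - 1) * (fact (k - j - 1 + 0) / (fact (k - j - 1) * l ^ 0)))"
    by (intro has_bochner_integral_mult_right hbi_gd_moment) (use assms in auto)
  then show "has_bochner_integral lborel (\<lambda>x. gamma_density k l x * (1 / x ^ j)) (l ^ j * fact (k - 1 - j) / fact (k - 1))"
    unfolding eq by simp
qed (use assms in auto)



lemma var_le:
  fixes g h :: "real \<Rightarrow> real" and M :: "real measure"
  assumes P: "prob_space M" and ig: "integrable M g" and ig2: "integrable M (\<lambda>z. (g z)^2)"
    and ih: "integrable M h" and le: "AE z in M. (g z - a)^2 \<le> h z"
  shows "integral\<^sup>L M (\<lambda>z. (g z)^2) - (integral\<^sup>L M g)^2 \<le> integral\<^sup>L M h"
proof -
  interpret prob_space M by (rule P)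
  have eq: "(\<lambda>z. (g z - a)^2) = (\<lambda>z. ((g z)^2 - 2 * a * g z) + a^2)"
    by (rule ext) (simp add: power2_eq_square algebra_simps)
  have i1: "integrable M (\<lambda>z. (g z)^2 - 2 * a * g z)" using ig ig2 by auto
  have "integral\<^sup>L M (\<lambda>z. (g z - a)^2) = integral\<^sup>L M (\<lambda>z. (g z)^2) - 2 * a * integral\<^sup>L M g + a^2"
    unfolding eq using i1 ig ig2 by (simp add: integral_add integral_diff prob_space)
  moreover have "integral\<^sup>L M (\<lambda>z. (g z - a)^2) \<le> integral\<^sup>L M h"
    by (rule integral_mono_AE) (use i1 ih le eq in \<open>auto\<close>)
  moreover have "0 \<le> (integral\<^sup>L M g - a)^2" by simp
  ultimately show ?thesis by (simp add: power2_eq_square algebra_simps)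
qed

lemma aux_ab: fixes a b c :: real assumes "0 < a" "0 < b" "0 < c"
  shows "- inverse c * (- (c * a * inverse (a * b))) = 1 / b"
  using assms by (simp add: field_simps)
lemma aux_pow: fixes w :: real assumes "0 < w"
  shows "- inverse (real r + 1) * (- (real (Suc r) * w ^ r * inverse ((w ^ Suc r) ^ Suc (Suc 0)))) = 1 / w ^ Suc (Suc r)"
proof -
  have e: "(w ^ Suc r) ^ Suc (Suc 0) = w ^ r * w ^ Suc (Suc r)"
    by (simp add: power_Suc power_mult_distrib)
  have "0 < w ^ r" "0 < w ^ Suc (Suc r)" using assms by auto
  moreover have c: "real r + 1 = real (Suc r)" by simp
  ultimately show ?thesis unfolding e c by (intro aux_ab) auto
qed

lemma ftc_pow:
  fixes F :: real and p :: nat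
  assumes F: "0 < F" and p: "2 \<le> p"
  shows "has_bochner_integral lborel (\<lambda>z. indicator {0..} z * (1 / (F + z) ^ p)) (1 / ((real p - 1) * F ^ (p - 1)))"
proof -
  obtain r where r: "p = Suc (Suc r)" using p by (metis add_2_eq_Suc le_Suc_ex)
  define G where "G z = - (1 / ((real r + 1) * (F + z) ^ Suc r))" for z
  have der: "DERIV G z :> 1 / (F + z) ^ Suc (Suc r)" if "0 \<le> z" for z
  proof -
    have pz: "0 < F + z" using F that by simp
    have "DERIV (\<lambda>z. (F + z) ^ Suc r) z :> real (Suc r) * (F + z) ^ r"
      by (auto intro!: derivative_eq_intros) (cases r, auto simp: algebra_simps)
    then have "DERIV (\<lambda>z. inverse ((F + z) ^ Suc r)) z :> - (real (Suc r) * (F + z) ^ r * inverse (((F + z) ^ Suc r) ^ Suc (Suc 0)))"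
      by (rule DERIV_inverse_fun) (use pz in simp)
    then have "DERIV (\<lambda>z. - inverse (real r + 1) * inverse ((F + z) ^ Suc r)) z :> - inverse (real r + 1) * (- (real (Suc r) * (F + z) ^ r * inverse (((F + z) ^ Suc r) ^ Suc (Suc 0))))"
      by (rule DERIV_cmult)
    moreover have "- inverse (real r + 1) * (- (real (Suc r) * (F + z) ^ r * inverse (((F + z) ^ Suc r) ^ Suc (Suc 0)))) = 1 / (F + z) ^ Suc (Suc r)"
      using pz by (rule aux_pow)
    moreover have "(\<lambda>z. - inverse (real r + 1) * inverse ((F + z) ^ Suc r)) = G"
      by (rule ext) (simp add: G_def field_simps)
    ultimately show ?thesis by simp
  qed
  have lim: "(G \<longlongrightarrow> 0) at_top"
  proof -
    have "filterlim (\<lambda>z. F + z) at_top at_top"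
      by (rule filterlim_tendsto_add_at_top[OF tendsto_const filterlim_ident])
    then have "filterlim (\<lambda>z. (F + z) ^ Suc r) at_top at_top"
      by (rule filterlim_pow_at_top[rotated]) simp
    then have "filterlim (\<lambda>z. (real r + 1) * (F + z) ^ Suc r) at_top at_top"
      by (intro filterlim_tendsto_pos_mult_at_top[OF tendsto_const]) auto
    then have "((\<lambda>z. 1 / ((real r + 1) * (F + z) ^ Suc r)) \<longlongrightarrow> 0) at_top"
      by (intro tendsto_divide_0[OF tendsto_const] filterlim_at_top_imp_at_infinity)
    then show ?thesis unfolding G_def using tendsto_minus by fastforce
  qed
  have "(\<integral>\<^sup>+x. ennreal (1 / (F + x) ^ Suc (Suc r)) * indicator {0 ..} x \<partial>lborel) = 0 - G 0"
    by (rule nn_integral_FTC_atLeast[OF _ der _ lim]) (use F in auto)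
  then have "(\<integral>\<^sup>+x. ennreal (indicator {0..} x * (1 / (F + x) ^ Suc (Suc r))) \<partial>lborel) = ennreal (1 / ((real r + 1) * F ^ Suc r))"
    by (subst nn_integral_cong[where v="\<lambda>x. ennreal (1 / (F + x) ^ Suc (Suc r)) * indicator {0 ..} x"])
      (auto simp: G_def split: split_indicator)
  then have "has_bochner_integral lborel (\<lambda>z. indicator {0..} z * (1 / (F + z) ^ Suc (Suc r))) (1 / ((real r + 1) * F ^ Suc r))"
    by (intro has_bochner_integral_nn_integral) (use F in \<open>auto split: split_indicator\<close>)
  then show ?thesis using r by (simp add: add.commute)
qed



lemma key_eq: fixes u v :: real assumes "0 < u" "0 < v"
  shows "1/u^2 - 1/v^2 = (v - u) * (1/(u* v^2) + 1/(u^2* v))"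
  using assms by (simp add: field_simps power2_eq_square)

lemma cube_bound: fixes a b :: real assumes "0 \<le> a" "0 \<le> b"
  shows "(a*b^2 + a^2*b)^2 \<le> 4 * (a^6 + b^6)"
proof -
  define c where "c = max a b"
  have c: "0 \<le> c" "a \<le> c" "b \<le> c" using assms by (auto simp: c_def)
  have "a*b^2 \<le> c*c^2" by (intro mult_mono power_mono) (use c assms in auto)
  moreover have "a^2*b \<le> c^2*c" by (intro mult_mono power_mono) (use c assms in auto)
  ultimately have "a*b^2 + a^2*b \<le> 2 * c^3" by (simp add: power2_eq_square power3_eq_cube)
  then have "(a*b^2 + a^2*b)^2 \<le> (2*c^3)^2" by (intro power_mono) (use assms in auto)
  also have "\<dots> = 4 * c^6" by (simp add: power_mult_distrib flip: power_mult)
  also have "c^6 \<le> a^6 + b^6" using assms by (auto simp: c_def max_def)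
  finally show ?thesis by simp
qed

lemma pw_A: fixes F z m :: real assumes "0 < F" "0 \<le> z" "0 \<le> m"
  shows "(1/(F+z)^2 - 1/(F+m)^2)^2 \<le> 4/F^6 * (z-m)^2"
proof -
  define u where "u = F + z"
  define v where "v = F + m"
  have uv: "F \<le> u" "F \<le> v" "0 < u" "0 < v" using assms by (auto simp: u_def v_def)
  have s1: "1/(u* v^2) \<le> 1/F^3"
  proof -
    have "F*F^2 \<le> u* v^2" by (intro mult_mono power_mono) (use uv assms in auto)
    then show ?thesis using assms uv by (intro divide_left_mono) (auto simp: power3_eq_cube power2_eq_square)
  qed
  have s2: "1/(u^2* v) \<le> 1/F^3"
  proof -
    have "F^2*F \<le> u^2* v" by (intro mult_mono power_mono) (use uv assms in auto)
    then show ?thesis using assms uv by (intro divide_left_mono) (auto simp: power3_eq_cube power2_eq_square)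
  qed
  have s0: "0 \<le> 1/(u* v^2) + 1/(u^2* v)" using uv by simp
  have "(1/u^2 - 1/v^2)^2 = (v-u)^2 * (1/(u* v^2) + 1/(u^2* v))^2"
    by (simp add: key_eq[OF uv(3,4)] power_mult_distrib)
  also have "\<dots> \<le> (v-u)^2 * (2/F^3)^2"
  proof -
    have "2/F^3 = 1/F^3 + 1/F^3" by simp
    then have "1/(u* v^2) + 1/(u^2* v) \<le> 2/F^3" using s1 s2 by linarith
    then show ?thesis by (intro mult_left_mono power_mono) (use s0 in auto)
  qed
  also have "\<dots> = 4/F^6 * (z-m)^2"
    by (simp add: u_def v_def power_divide power2_commute flip: power_mult)
  finally show ?thesis by (simp add: u_def v_def)
qed

lemma pw_B: fixes F z m :: real assumes "0 < F" "0 < z" "0 < m"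
  shows "(1/(F+z)^2 - 1/(F+m)^2)^2 \<le> 8 * (z-m)^2 * (1/z^6 + 1/m^6)"
proof -
  define u where "u = F + z"
  define v where "v = F + m"
  have uv: "z \<le> u" "m \<le> v" "0 < u" "0 < v" using assms by (auto simp: u_def v_def)
  have s1: "1/(u* v^2) \<le> (1/z)*(1/m)^2"
  proof -
    have "z*m^2 \<le> u* v^2" by (intro mult_mono power_mono) (use uv assms in auto)
    then show ?thesis using assms uv by (simp add: divide_simps power2_eq_square)
  qed
  have s2: "1/(u^2* v) \<le> (1/z)^2*(1/m)"
  proof -
    have "z^2*m \<le> u^2* v" by (intro mult_mono power_mono) (use uv assms in auto)
    then show ?thesis using assms uv by (simp add: divide_simps power2_eq_square)
  qed
  have s0: "0 \<le> 1/(u* v^2) + 1/(u^2* v)" using uv by simp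
  have "(1/u^2 - 1/v^2)^2 = (v-u)^2 * (1/(u* v^2) + 1/(u^2* v))^2"
    by (simp add: key_eq[OF uv(3,4)] power_mult_distrib)
  also have "\<dots> \<le> (v-u)^2 * ((1/z)*(1/m)^2 + (1/z)^2*(1/m))^2"
    by (intro mult_left_mono power_mono) (use s0 s1 s2 in auto)
  also have "\<dots> \<le> (v-u)^2 * (4 * ((1/z)^6 + (1/m)^6))"
    by (intro mult_left_mono cube_bound) (use assms in auto)
  also have "\<dots> = 4 * (z-m)^2 * (1/z^6 + 1/m^6)"
    using assms by (simp add: u_def v_def power_one_over power2_commute)
  also have "\<dots> \<le> 8 * (z-m)^2 * (1/z^6 + 1/m^6)"
    by (intro mult_right_mono) (use assms in auto)
  finally show ?thesis by (simp add: u_def v_def)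
qed

lemma pw_C: fixes F z :: real assumes "0 < F" "0 < z"
  shows "(1/(F+z)^2)^2 \<le> 1/F * (1/z^3)"
proof -
  have "F * z^3 \<le> (F+z) * (F+z)^3" by (intro mult_mono power_mono) (use assms in auto)
  then have "F * z^3 \<le> (F+z)^4" by (simp add: power_Suc[symmetric] del: power_Suc)
  then show ?thesis using assms by (simp add: divide_simps flip: power_mult)
qed



lemma gm_meas: "h \<in> borel_measurable borel \<Longrightarrow> h \<in> borel_measurable (gamma_measure k l)"
proof -
  have "measurable (gamma_measure k l) borel = measurable borel borel"
    by (rule measurable_cong_sets) (auto simp: gm_sets)
  then show "h \<in> borel_measurable borel \<Longrightarrow> h \<in> borel_measurable (gamma_measure k l)" by metis
qed

lemma g_int:
  assumes k: "1 \<le> k" and l: "0 < l" and F: "0 < F"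
  shows "integrable (gamma_measure k l) (\<lambda>z. 1/(F+z)^2)" "integrable (gamma_measure k l) (\<lambda>z. (1/(F+z)^2)^2)"
proof -
  interpret prob_space "gamma_measure k l" by (rule gm_prob[OF k l])
  have b: "1/(F+z)^2 \<le> 1/F^2" if "0 < z" for z
    using F that by (intro divide_left_mono power_mono) auto
  show "integrable (gamma_measure k l) (\<lambda>z. 1/(F+z)^2)"
  proof (rule integrable_const_bound[where B="1/F^2"])
    show "AE x in gamma_measure k l. norm (1 / (F + x)\<^sup>2) \<le> 1 / F\<^sup>2"
      using gm_AE_pos by eventually_elim (use b in auto)
  qed (intro gm_meas, measurable)
  show "integrable (gamma_measure k l) (\<lambda>z. (1/(F+z)^2)^2)"
  proof (rule integrable_const_bound[where B="(1/F^2)^2"])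
    show "AE x in gamma_measure k l. norm ((1 / (F + x)\<^sup>2)^2) \<le> (1 / F\<^sup>2)^2"
      using gm_AE_pos by eventually_elim (use b F in \<open>auto intro!: power_mono\<close>)
  qed (intro gm_meas, measurable)
qed

lemma bound_A:
  assumes k: "1 \<le> k" and l: "0 < l" and F: "0 < F"
  shows "(\<integral>z. (1/(F+z)^2)^2 \<partial>gamma_measure k l) - (\<integral>z. 1/(F+z)^2 \<partial>gamma_measure k l)^2
     \<le> 4 * real k / (l^2 * F^6)"
proof -
  let ?M = "gamma_measure k l"
  interpret prob_space ?M by (rule gm_prob[OF k l])
  define m where "m = real k / l"
  have m: "0 < m" using k l by (simp add: m_def)
  obtain q where q: "k = Suc q" using k by (cases k) auto
  have m1: "integrable ?M (\<lambda>z. z)" "integral\<^sup>L ?M (\<lambda>z. z) = real k / l"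
    using gm_moment[OF k l, of 1] by (auto simp: q)
  have m2: "integrable ?M (\<lambda>z. z^2)" "integral\<^sup>L ?M (\<lambda>z. z^2) = real k * (real k + 1) / l^2"
  proof -
    have e: "fact (k - 1 + 2) / (fact (k - 1) * l ^ 2) = real k * (real k + 1) / l^2"
    proof -
      have "fact (k - 1 + 2) = (real k * (real k + 1)) * (fact q :: real)" by (simp add: q algebra_simps)
      moreover have "fact (k - 1) = (fact q :: real)" by (simp add: q)
      ultimately show ?thesis by simp
    qed
    show "integrable ?M (\<lambda>z. z^2)" "integral\<^sup>L ?M (\<lambda>z. z^2) = real k * (real k + 1) / l^2"
      using gm_moment[OF k l, of 2] unfolding e by auto
  qed
  define h where "h z = 4/F^6 * (z^2 - 2*m*z + m^2)" for z
  have ih: "integrable ?M h" unfolding h_def using m1 m2 by auto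
  have "integral\<^sup>L ?M h = 4/F^6 * (integral\<^sup>L ?M (\<lambda>z. z^2) - 2*m*integral\<^sup>L ?M (\<lambda>z. z) + m^2)"
    unfolding h_def using m1 m2 by (simp add: integral_diff integral_add prob_space)
  also have "\<dots> = 4 * real k / (l^2 * F^6)"
    unfolding m1 m2 m_def using l F by (simp add: field_simps power2_eq_square)
  finally have vh: "integral\<^sup>L ?M h = 4 * real k / (l^2 * F^6)" .
  have "(\<integral>z. (1/(F+z)^2)^2 \<partial>?M) - (\<integral>z. 1/(F+z)^2 \<partial>?M)^2 \<le> integral\<^sup>L ?M h"
  proof (rule var_le[where a="1/(F+m)^2"])
    show "AE z in ?M. (1/(F+z)^2 - 1/(F+m)^2)^2 \<le> h z"
      using gm_AE_pos
    proof eventually_elim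
      case (elim z)
      have "(z - m)^2 = z^2 - 2*m*z + m^2" by (simp add: power2_eq_square algebra_simps)
      then show ?case using pw_A[OF F _ , of z m] elim m by (simp add: h_def)
    qed
  qed (use g_int[OF k l F] ih prob_space_axioms in auto)
  then show ?thesis using vh by simp
qed

lemma bound_Bmid:
  assumes k: "4 \<le> k" and l: "0 < l" and F: "0 < F"
  shows "(\<integral>z. (1/(F+z)^2)^2 \<partial>gamma_measure k l) - (\<integral>z. 1/(F+z)^2 \<partial>gamma_measure k l)^2
     \<le> l^3 / F"
proof -
  let ?M = "gamma_measure k l"
  have k1: "1 \<le> k" using k by simp
  interpret prob_space ?M by (rule gm_prob[OF k1 l])
  have n3: "integrable ?M (\<lambda>z. 1 / z^3)" "integral\<^sup>L ?M (\<lambda>z. 1 / z^3) = l ^ 3 * fact (k - 1 - 3) / fact (k - 1)"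
    using gm_negmoment[of 3 k l] k l by auto
  define h where "h z = 1/F * (1/z^3)" for z
  have ih: "integrable ?M h" unfolding h_def by (rule integrable_mult_right) (rule n3(1))
  have "integral\<^sup>L ?M h = 1/F * (l ^ 3 * fact (k - 1 - 3) / fact (k - 1))"
    unfolding h_def by (simp only: integral_mult_right_zero n3(2))
  also have "\<dots> \<le> 1/F * (l ^ 3)"
  proof -
    have "fact (k - 1 - 3) \<le> (fact (k - 1) :: real)" by (intro fact_mono) auto
    then have "l ^ 3 * fact (k - 1 - 3) / fact (k - 1) \<le> l ^ 3 * 1"
      using l by (subst divide_le_eq) (auto intro!: mult_left_mono)
    then show ?thesis using F by (intro mult_left_mono) auto
  qed
  finally have vh: "integral\<^sup>L ?M h \<le> l^3 / F" by simp
  have "(\<integral>z. (1/(F+z)^2)^2 \<partial>?M) - (\<integral>z. 1/(F+z)^2 \<partial>?M)^2 \<le> integral\<^sup>L ?M h"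
  proof (rule var_le[where a=0])
    show "AE z in ?M. (1/(F+z)^2 - 0)^2 \<le> h z"
      using gm_AE_pos by eventually_elim (use pw_C F in \<open>auto simp: h_def\<close>)
  qed (use g_int[OF k1 l F] ih prob_space_axioms in auto)
  then show ?thesis using vh by simp
qed

lemma pw_D:
  assumes k: "1 \<le> k" "k \<le> 3" and l: "0 < l" and F: "0 < F"
  shows "gamma_density k l z * (1/(F+z)^2)^2 \<le> l^k / fact (k - 1) * (indicator {0..} z * (1 / (F + z) ^ (5 - k)))"
proof (cases "0 < z")
  case True
  define w where "w = F + z"
  have w: "0 < w" "z \<le> w" using True F by (auto simp: w_def)
  have e1: "(1/(F+z)^2)^2 = 1 / (w^(k-1) * w^(5-k))"
  proof -
    have "(k-1)+(5-k) = 4" using k by simp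
    then have "w^(k-1)*w^(5-k) = w^4" by (metis power_add)
    moreover have "(1/w^2)^2 = 1/w^4" by (simp add: power_divide flip: power_mult)
    ultimately show ?thesis by (simp add: w_def)
  qed
  have e2: "z ^ (k - 1) * exp (- l * z) \<le> w ^ (k - 1)"
  proof -
    have "z ^ (k - 1) * exp (- l * z) \<le> z ^ (k - 1) * 1"
      using True l by (intro mult_left_mono) auto
    also have "\<dots> \<le> w ^ (k - 1)" using True w by (simp add: power_mono)
    finally show ?thesis .
  qed
  have "gamma_density k l z * (1/(F+z)^2)^2 = l^k / fact (k - 1) * (z ^ (k - 1) * exp (- l * z) / (w^(k-1) * w^(5-k)))"
    using True unfolding e1 by (simp add: gamma_density_def)
  also have "\<dots> \<le> l^k / fact (k - 1) * (w ^ (k - 1) / (w^(k-1) * w^(5-k)))"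
    using e2 w l by (intro mult_left_mono divide_right_mono) auto
  also have "\<dots> = l^k / fact (k - 1) * (indicator {0..} z * (1 / (F + z) ^ (5 - k)))"
    using w True by (simp add: w_def)
  finally show ?thesis .
qed (use F l in \<open>auto simp: gamma_density_def indicator_def\<close>)

lemma bound_Bsmall:
  assumes k: "1 \<le> k" "k \<le> 3" and l: "0 < l" and F: "0 < F"
  shows "(\<integral>z. (1/(F+z)^2)^2 \<partial>gamma_measure k l) - (\<integral>z. 1/(F+z)^2 \<partial>gamma_measure k l)^2
     \<le> l^k / fact (k - 1) * (1 / ((real (5 - k) - 1) * F ^ (5 - k - 1)))"
proof -
  let ?M = "gamma_measure k l"
  have nn: "AE x in lborel. 0 \<le> gamma_density k l x" using l by (simp add: gd_nonneg)
  have i2: "integrable ?M (\<lambda>z. (1/(F+z)^2)^2)" using g_int[OF k(1) l F] by simp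
  have i1: "integrable lborel (\<lambda>z. gamma_density k l z * (1/(F+z)^2)^2)"
    using i2 unfolding gamma_measure_def by (subst (asm) integrable_density) (auto simp: nn)
  have eqd: "(\<integral>z. (1/(F+z)^2)^2 \<partial>?M) = (\<integral>z. gamma_density k l z * (1/(F+z)^2)^2 \<partial>lborel)"
    unfolding gamma_measure_def by (subst integral_density) (auto simp: nn)
  have hb: "has_bochner_integral lborel (\<lambda>z. l^k / fact (k - 1) * (indicator {0..} z * (1 / (F + z) ^ (5 - k))))
      (l^k / fact (k - 1) * (1 / ((real (5 - k) - 1) * F ^ (5 - k - 1))))"
    by (intro has_bochner_integral_mult_right ftc_pow) (use F k in auto)
  have "(\<integral>z. gamma_density k l z * (1/(F+z)^2)^2 \<partial>lborel) \<le> (\<integral>z. l^k / fact (k - 1) * (indicator {0..} z * (1 / (F + z) ^ (5 - k))) \<partial>lborel)"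
    by (rule integral_mono[OF i1]) (use hb[unfolded has_bochner_integral_iff] pw_D[OF k l F] in auto)
  then have "(\<integral>z. (1/(F+z)^2)^2 \<partial>?M) \<le> l^k / fact (k - 1) * (1 / ((real (5 - k) - 1) * F ^ (5 - k - 1)))"
    using hb[unfolded has_bochner_integral_iff] eqd by simp
  moreover have "0 \<le> (\<integral>z. 1/(F+z)^2 \<partial>?M)^2" by simp
  ultimately show ?thesis by linarith
qed



lemma arith_big:
  fixes q :: real assumes q: "0 \<le> q"
  shows "(q+37) / ((q+1)*(q+2)*(q+3)*(q+4)*(q+5)*(q+6)) \<le> 6 * 7^6 / (q+7)^5"
proof -
  define k where "k = q + 7"
  have kp: "0 < k" using q by (simp add: k_def)
  have b: "k/7 \<le> q + i" if "1 \<le> i" for i :: real using q that by (simp add: k_def)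
  have "(k/7)^6 = (k/7)*(k/7)*(k/7)*(k/7)*(k/7)*(k/7)" by (simp add: eval_nat_numeral)
  also have "\<dots> \<le> (q+1)*(q+2)*(q+3)*(q+4)*(q+5)*(q+6)"
    by (intro mult_mono b) (use q kp in auto)
  finally have P: "(k/7)^6 \<le> (q+1)*(q+2)*(q+3)*(q+4)*(q+5)*(q+6)" .
  have "(q+37) / ((q+1)*(q+2)*(q+3)*(q+4)*(q+5)*(q+6)) \<le> (6*k) / ((k/7)^6)"
    by (intro frac_le P) (use q kp in \<open>auto simp: k_def\<close>)
  also have "\<dots> = 6 * 7^6 / k^5" using kp by (simp add: field_simps eval_nat_numeral)
  finally show ?thesis by (simp add: k_def)
qed

lemma t1_aux: fixes a P l x :: real assumes "0 < a" "0 < P" "0 < l"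
  shows "l^4*(a*((x+1)*(x+2)))/(a*P) - 2*((x+7)/l)*(l^5*(a*(x+1))/(a*P)) + ((x+7)/l)^2*(l^6*a/(a*P)) = l^4*((x+37)/P)"
proof -
  have 1: "l^4*(a*((x+1)*(x+2)))/(a*P) = l^4*((x+1)*(x+2))/P" using assms by simp
  have 2: "2*((x+7)/l)*(l^5*(a*(x+1))/(a*P)) = l^4*(2*(x+7)*(x+1))/P"
    using assms by (simp add: field_simps eval_nat_numeral)
  have 3: "((x+7)/l)^2*(l^6*a/(a*P)) = l^4*((x+7)^2)/P"
    using assms by (simp add: field_simps eval_nat_numeral)
  have 4: "l^4*((x+1)*(x+2))/P - l^4*(2*(x+7)*(x+1))/P + l^4*((x+7)^2)/P = l^4*(((x+1)*(x+2) - 2*(x+7)*(x+1) + (x+7)^2)/P)"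
    using assms by (simp add: field_simps)
  have 5: "(x+1)*(x+2) - 2*(x+7)*(x+1) + (x+7)^2 = x + 37" by (simp add: power2_eq_square algebra_simps)
  show ?thesis unfolding 1 2 3 4 5 ..
qed
lemma h_aux: fixes z m :: real assumes "0 < z" "0 < m"
  shows "8 * (z-m)^2 * (1/z^6 + 1/m^6) = 8*(1/z^4 - 2*m*(1/z^5) + m^2*(1/z^6)) + 8/m^6*(z^2 - 2*m*z + m^2)"
proof -
  have e: "(z-m)^2 = z^2 - 2*m*z + m^2" by (simp add: power2_eq_square algebra_simps)
  have f: "(z^2 - 2*m*z + m^2) * (1/z^6) = 1/z^4 - 2*m*(1/z^5) + m^2*(1/z^6)"
    using assms by (simp add: field_simps eval_nat_numeral)
  have "8 * (z-m)^2 * (1/z^6 + 1/m^6) = 8*((z^2 - 2*m*z + m^2) * (1/z^6)) + 8/m^6*(z^2 - 2*m*z + m^2)"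
    unfolding e by (simp add: algebra_simps add_divide_distrib diff_divide_distrib)
  then show ?thesis unfolding f .
qed

lemma t2_aux: fixes k l :: real assumes "0 < k" "0 < l"
  shows "8/(k/l)^6*(k * (k + 1) / l^2 - 2*(k/l)*(k / l) + (k/l)^2) = 8 * l^4 / k ^ 5"
proof -
  have "k * (k + 1) / l^2 - 2*(k/l)*(k / l) + (k/l)^2 = k / l^2"
    using assms by (simp add: field_simps power2_eq_square)
  then show ?thesis using assms by (simp add: field_simps eval_nat_numeral)
qed


lemma lin_int:
  fixes M :: "real measure" and f1 f2 f4 f5 f6 :: "real \<Rightarrow> real"
  assumes P: "prob_space M" and i: "integrable M f1" "integrable M f2" "integrable M f4" "integrable M f5" "integrable M f6"
  shows "integral\<^sup>L M (\<lambda>z. 8*(f4 z - 2*m*f5 z + m^2*f6 z) + 8/m^6*(f2 z - 2*m*f1 z + m^2))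
    = 8*(integral\<^sup>L M f4 - 2*m*integral\<^sup>L M f5 + m^2*integral\<^sup>L M f6) + 8/m^6*(integral\<^sup>L M f2 - 2*m*integral\<^sup>L M f1 + m^2)"
proof -
  interpret prob_space M by (rule P)
  show ?thesis using i by (simp add: prob_space)
qed

lemma bound_Bbig:
  assumes k: "7 \<le> k" and l: "0 < l" and F: "0 < F"
  shows "(\<integral>z. (1/(F+z)^2)^2 \<partial>gamma_measure k l) - (\<integral>z. 1/(F+z)^2 \<partial>gamma_measure k l)^2
     \<le> 8 * (6 * 7^6 + 1) * l^4 / real k ^ 5"
proof -
  let ?M = "gamma_measure k l"
  have k1: "1 \<le> k" using k by simp
  interpret prob_space ?M by (rule gm_prob[OF k1 l])
  define m where "m = real k / l"
  have m: "0 < m" using k l by (simp add: m_def)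
  obtain q where q: "k = q + 7" using k by (metis add.commute le_Suc_ex)
  have m1: "integrable ?M (\<lambda>z. z)" "integral\<^sup>L ?M (\<lambda>z. z) = real k / l"
  proof -
    obtain q' where q': "k = Suc q'" using k1 by (cases k) auto
    show "integrable ?M (\<lambda>z. z)" "integral\<^sup>L ?M (\<lambda>z. z) = real k / l"
      using gm_moment[OF k1 l, of 1] by (auto simp: q')
  qed
  have m2: "integrable ?M (\<lambda>z. z^2)" "integral\<^sup>L ?M (\<lambda>z. z^2) = real k * (real k + 1) / l^2"
  proof -
    have e: "fact (k - 1 + 2) / (fact (k - 1) * l ^ 2) = real k * (real k + 1) / l^2"
    proof -
      have "fact (k - 1 + 2) = (real k * (real k + 1)) * (fact (k - 1) :: real)"
        using k1 by (simp add: algebra_simps fact_Suc flip: Suc_diff_le) (cases k, auto simp: algebra_simps)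
      then show ?thesis by simp
    qed
    show "integrable ?M (\<lambda>z. z^2)" "integral\<^sup>L ?M (\<lambda>z. z^2) = real k * (real k + 1) / l^2"
      using gm_moment[OF k1 l, of 2] unfolding e by auto
  qed
  have n4: "integrable ?M (\<lambda>z. 1 / z^4)" "integral\<^sup>L ?M (\<lambda>z. 1 / z^4) = l ^ 4 * fact (k - 1 - 4) / fact (k - 1)"
    using gm_negmoment[of 4 k l] k l by auto
  have n5: "integrable ?M (\<lambda>z. 1 / z^5)" "integral\<^sup>L ?M (\<lambda>z. 1 / z^5) = l ^ 5 * fact (k - 1 - 5) / fact (k - 1)"
    using gm_negmoment[of 5 k l] k l by auto
  have n6: "integrable ?M (\<lambda>z. 1 / z^6)" "integral\<^sup>L ?M (\<lambda>z. 1 / z^6) = l ^ 6 * fact (k - 1 - 6) / fact (k - 1)"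
    using gm_negmoment[of 6 k l] k l by auto
  define h where "h z = 8*(1/z^4 - 2*m*(1/z^5) + m^2*(1/z^6)) + 8/m^6*(z^2 - 2*m*z + m^2)" for z
  have ic: "\<And>c. integrable ?M (\<lambda>z. c)" by simp
  have ih: "integrable ?M h" unfolding h_def
    by (intro Bochner_Integration.integrable_add Bochner_Integration.integrable_diff Bochner_Integration.integrable_mult_right ic m1(1) m2(1) n4(1) n5(1) n6(1))
  have "integral\<^sup>L ?M h = 8*(integral\<^sup>L ?M (\<lambda>z. 1 / z^4) - 2*m*integral\<^sup>L ?M (\<lambda>z. 1 / z^5) + m^2*integral\<^sup>L ?M (\<lambda>z. 1 / z^6))
      + 8/m^6*(integral\<^sup>L ?M (\<lambda>z. z^2) - 2*m*integral\<^sup>L ?M (\<lambda>z. z) + m^2)"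
    unfolding h_def by (rule lin_int[OF prob_space_axioms m1(1) m2(1) n4(1) n5(1) n6(1)])
  also have "\<dots> \<le> 8 * (6 * 7^6 + 1) * l^4 / real k ^ 5"
  proof -
    define P where "P = (real q+1)*(real q+2)*(real q+3)*(real q+4)*(real q+5)*(real q+6)"
    have Pp: "0 < P" by (simp add: P_def)
    have f1: "fact (k - 1) = fact q * P"
    proof -
      have "k - 1 = Suc (Suc (Suc (Suc (Suc (Suc q)))))" by (simp add: q)
      then show ?thesis unfolding P_def by (simp only: fact_Suc) (simp add: algebra_simps)
    qed
    have f4: "fact (k - 1 - 4) = fact q * ((real q+1)*(real q+2))"
    proof -
      have "k - 1 - 4 = Suc (Suc q)" by (simp add: q)
      then show ?thesis by (simp only: fact_Suc) (simp add: algebra_simps)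
    qed
    have f5: "fact (k - 1 - 5) = fact q * (real q+1)"
    proof -
      have "k - 1 - 5 = Suc q" by (simp add: q)
      then show ?thesis by (simp only: fact_Suc) (simp add: algebra_simps)
    qed
    have f6: "fact (k - 1 - 6) = (fact q :: real)"
      by (simp add: q)
    have fq: "0 < (fact q :: real)" by simp
    have t1: "l ^ 4 * fact (k - 1 - 4) / fact (k - 1) - 2*m*(l ^ 5 * fact (k - 1 - 5) / fact (k - 1)) + m^2*(l ^ 6 * fact (k - 1 - 6) / fact (k - 1))
        = l^4 * ((real q + 37) / P)"
    proof -
      have rk: "real k = real q + 7" by (simp add: q)
      show ?thesis unfolding f1 f4 f5 f6 m_def rk by (rule t1_aux[OF fq Pp l])
    qed
    have t2: "8/m^6*(real k * (real k + 1) / l^2 - 2*m*(real k / l) + m^2) = 8 * l^4 / real k ^ 5"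
      unfolding m_def by (rule t2_aux) (use l k in auto)
    have t3: "(real q + 37) / P \<le> 6 * 7^6 / real k ^ 5"
      using arith_big[of "real q"] by (simp add: P_def q)
    have "l^4 * ((real q + 37) / P) \<le> l^4 * (6 * 7^6 / real k ^ 5)"
      by (rule mult_left_mono[OF t3]) (use l in simp)
    then have "8 * (l^4 * ((real q + 37) / P)) + 8 * l^4 / real k ^ 5 \<le> 8 * (l^4 * (6 * 7^6 / real k ^ 5)) + 8 * l^4 / real k ^ 5"
      by linarith
    also have "\<dots> = 8 * (6 * 7^6 + 1) * l^4 / real k ^ 5" by (simp add: field_simps)
    finally show ?thesis unfolding n4(2) n5(2) n6(2) m1(2) m2(2) t1 t2 .
  qed
  finally have vh: "integral\<^sup>L ?M h \<le> 8 * (6 * 7^6 + 1) * l^4 / real k ^ 5" .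
  have "(\<integral>z. (1/(F+z)^2)^2 \<partial>?M) - (\<integral>z. 1/(F+z)^2 \<partial>?M)^2 \<le> integral\<^sup>L ?M h"
  proof (rule var_le[where a="1/(F+m)^2"])
    show "AE z in ?M. (1/(F+z)^2 - 1/(F+m)^2)^2 \<le> h z"
      using gm_AE_pos
    proof eventually_elim
      case (elim z)
      have "8 * (z-m)^2 * (1/z^6 + 1/m^6) = h z"
        unfolding h_def using elim m by (rule h_aux)
      then show ?case using pw_B[OF F elim m] by simp
    qed
  qed (use g_int[OF k1 l F] ih prob_space_axioms in auto)
  then show ?thesis using vh by simp
qed



lemma fin_div:
  fixes V Cc Nn D :: real assumes "0 < D" "V * D \<le> Cc * Nn"
  shows "V \<le> Cc * (Nn / D)"
  using assms by (simp add: pos_le_divide_eq mult.commute)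

lemma arith_k3:
  fixes K N F l V :: real
  assumes K: "3 \<le> K" and N: "2 \<le> N" and F: "0 < F" and l1: "N^2/(2*K) \<le> l" and l2: "l \<le> 2*N^2/K"
    and VA: "V \<le> 4*K/(l^2*F^6)"
    and VB: "(7 \<le> K \<and> V \<le> 8 * (6 * 7^6 + 1) * l^4 / K^5) \<or> (K \<le> 6 \<and> V \<le> l^3/F)"
  shows "V \<le> 10^9 * ((K^3*N^12*F^3 + K^9*N^6)/(N^16*F^9 + K^16*F))"
proof (rule fin_div)
  have Kp: "0 < K" and Np: "0 < N" using K N by auto
  have lp: "0 < l" using l1 Kp Np by (smt (verit) divide_pos_pos zero_less_power)
  show "0 < N^16*F^9 + K^16*F" using Kp Np F by (intro add_pos_pos) auto
  show "V * (N^16*F^9 + K^16*F) \<le> 10^9 * (K^3*N^12*F^3 + K^9*N^6)"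
  proof (cases "V \<le> 0")
    case True
    have "V * (N^16*F^9 + K^16*F) \<le> 0" using True Kp Np F by (intro mult_nonpos_nonneg) auto
    also have "0 \<le> (10::real)^9 * (K^3*N^12*F^3 + K^9*N^6)" using Kp Np F by auto
    finally show ?thesis .
  next
    case False
    then have Vp: "0 < V" by simp
    have N1: "0 \<le> K^3*N^12*F^3" "0 \<le> K^9*N^6" using Kp Np F by auto
    show ?thesis
    proof (cases "K^16*F \<le> N^16*F^9")
      case True
      have lsq: "N^4/(4*K^2) \<le> l^2"
      proof -
        have "(N^2/(2*K))^2 \<le> l^2" by (rule power_mono[OF l1]) (use Kp in auto)
        moreover have "(N^2/(2*K))^2 = N^4/(4*K^2)" by (simp add: power_divide power_mult_distrib flip: power_mult)
        ultimately show ?thesis by simp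
      qed
      have "V \<le> 4*K/(l^2*F^6)" by (rule VA)
      also have "\<dots> \<le> 4*K/((N^4/(4*K^2))*F^6)"
        by (intro divide_left_mono mult_right_mono lsq) (use Kp Np F lp in auto)
      also have "\<dots> = 16*K^3/(N^4*F^6)" using Kp Np F by (simp add: field_simps eval_nat_numeral)
      finally have V1: "V \<le> 16*K^3/(N^4*F^6)" .
      have "V * (N^16*F^9 + K^16*F) \<le> V * (2 * (N^16*F^9))" using True Vp by (intro mult_left_mono) (auto simp: mult.commute)
      also have "\<dots> \<le> 16*K^3/(N^4*F^6) * (2 * (N^16*F^9))" using V1 Np F by (intro mult_right_mono) auto
      also have "\<dots> = 32 * (K^3*N^12*F^3)" using Np F by (simp add: field_simps eval_nat_numeral)
      also have "\<dots> \<le> 10^9 * (K^3*N^12*F^3 + K^9*N^6)"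
      proof -
        have e: "(10::real)^9 = 1000000000" by simp
        have "\<And>X Y::real. 0 \<le> X \<Longrightarrow> 0 \<le> Y \<Longrightarrow> 32 * X \<le> 1000000000 * (X + Y)" by (simp add: algebra_simps)
        then show ?thesis unfolding e using N1 by blast
      qed
      finally show ?thesis .
    next
      case False
      then have D: "N^16*F^9 < K^16*F" by simp
      have "V * (N^16*F^9 + K^16*F) \<le> V * (2 * (K^16*F))" using D Vp by (intro mult_left_mono) (auto simp: mult.commute)
      also have "\<dots> \<le> 10^9 * (K^9*N^6)"
        using VB
      proof
        assume h: "7 \<le> K \<and> V \<le> 8 * (6 * 7^6 + 1) * l^4 / K^5"
        have l4: "l^4 \<le> 16*N^8/K^4"
        proof -
          have "l^4 \<le> (2*N^2/K)^4" by (rule power_mono[OF l2]) (use lp in auto)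
          also have "\<dots> = 16*N^8/K^4" by (simp add: power_divide power_mult_distrib flip: power_mult)
          finally show ?thesis .
        qed
        have NF: "N^2 * F < K^2"
        proof -
          have "(N^2*F)^8 * F < (K^2)^8 * F"
            using D by (simp add: power_mult_distrib eval_nat_numeral algebra_simps)
          then have "(N^2*F)^8 < (K^2)^8" using F by simp
          then show ?thesis by (rule power_less_imp_less_base) (use Kp in auto)
        qed
        have "V \<le> 8 * (6 * 7^6 + 1) * (16*N^8/K^4) / K^5"
          using h l4 Kp by (smt (verit) divide_right_mono mult_left_mono zero_le_power)
        then have "V * (2 * (K^16*F)) \<le> 8 * (6 * 7^6 + 1) * (16*N^8/K^4) / K^5 * (2 * (K^16*F))"
          using Kp F by (intro mult_right_mono) auto
        also have "\<dots> = 256 * (6 * 7^6 + 1) * (K^7 * N^6) * (N^2 * F)"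
          using Kp by (simp add: field_simps eval_nat_numeral)
        also have "\<dots> \<le> 256 * (6 * 7^6 + 1) * (K^7 * N^6) * K^2"
          using NF Kp Np by (intro mult_left_mono) auto
        also have "\<dots> \<le> 10^9 * (K^9*N^6)" using Kp Np by (simp add: eval_nat_numeral)
        finally show ?thesis .
      next
        assume h: "K \<le> 6 \<and> V \<le> l^3/F"
        have l3: "l^3 \<le> 8*N^6/K^3"
        proof -
          have "l^3 \<le> (2*N^2/K)^3" by (rule power_mono[OF l2]) (use lp in auto)
          also have "\<dots> = 8*N^6/K^3" by (simp add: power_divide power_mult_distrib flip: power_mult)
          finally show ?thesis .
        qed
        have "V \<le> 8*N^6/K^3/F" using h l3 F by (smt (verit) divide_right_mono)
        then have "V * (2 * (K^16*F)) \<le> 8*N^6/K^3/F * (2 * (K^16*F))"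
          using Kp F by (intro mult_right_mono) auto
        also have "\<dots> = 16 * K^4 * (K^9*N^6)"
          using Kp F by (simp add: field_simps eval_nat_numeral)
        also have "\<dots> \<le> 10^9 * (K^9*N^6)"
        proof (intro mult_right_mono)
          have "K^4 \<le> 6^4" by (rule power_mono) (use h Kp in auto)
          then show "16 * K^4 \<le> (10::real)^9" by simp
        qed (use Kp Np in auto)
        finally show ?thesis .
      qed
      also have "\<dots> \<le> 10^9 * (K^3*N^12*F^3 + K^9*N^6)" using N1 by simp
      finally show ?thesis .
    qed
  qed
qed

lemma arith_k1:
  fixes N F l V :: real
  assumes N: "2 \<le> N" and F: "0 < F" and l1: "N^2/2 \<le> l" and l2: "l \<le> 2*N^2"
    and VA: "V \<le> 4/(l^2*F^6)" and VB: "V \<le> l/(3*F^3)"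
  shows "V \<le> 10^9 * ((N^6*F^2 + N^2)/(N^8*F^7 + F^3))"
proof (rule fin_div)
  have Np: "0 < N" using N by auto
  have lp: "0 < l" using l1 Np by (smt (verit) divide_pos_pos zero_less_power)
  show "0 < N^8*F^7 + F^3" using Np F by (intro add_pos_pos) auto
  have N1: "0 \<le> N^6*F^2" "0 \<le> N^2" using Np F by auto
  have e: "(10::real)^9 = 1000000000" by simp
  show "V * (N^8*F^7 + F^3) \<le> 10^9 * (N^6*F^2 + N^2)"
  proof (cases "V \<le> 0")
    case True
    have "V * (N^8*F^7 + F^3) \<le> 0" using True Np F by (intro mult_nonpos_nonneg) auto
    also have "0 \<le> (10::real)^9 * (N^6*F^2 + N^2)" using Np F by auto
    finally show ?thesis .
  next
    case False
    then have Vp: "0 < V" by simp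
    show ?thesis
    proof (cases "F^3 \<le> N^8*F^7")
      case True
      have lsq: "N^4/4 \<le> l^2"
      proof -
        have "(N^2/2)^2 \<le> l^2" by (rule power_mono[OF l1]) (use Np in auto)
        moreover have "(N^2/2)^2 = N^4/4" by (simp add: power_divide flip: power_mult)
        ultimately show ?thesis by simp
      qed
      have "V \<le> 4/(l^2*F^6)" by (rule VA)
      also have "\<dots> \<le> 4/((N^4/4)*F^6)"
        by (intro divide_left_mono mult_right_mono lsq) (use Np F lp in auto)
      also have "\<dots> = 16/(N^4*F^6)" using Np F by (simp add: field_simps)
      finally have V1: "V \<le> 16/(N^4*F^6)" .
      have NF: "1 \<le> N^2 * F"
      proof (rule ccontr)
        assume "\<not> 1 \<le> N^2 * F"
        then have "(N^2*F)^4 < 1^4" using Np F by (intro power_strict_mono) auto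
        then have "N^8*F^4*F^3 < F^3" using F by (simp add: power_mult_distrib flip: power_mult)
        moreover have "N^8*F^4*F^3 = N^8*F^7" by (simp flip: power_add)
        ultimately show False using True by simp
      qed
      have "V * (N^8*F^7 + F^3) \<le> V * (2 * (N^8*F^7))" using True Vp by (intro mult_left_mono) (auto simp: mult.commute)
      also have "\<dots> \<le> 16/(N^4*F^6) * (2 * (N^8*F^7))" using V1 Np F by (intro mult_right_mono) auto
      also have "\<dots> = 32 * (N^4*F)" using Np F by (simp add: field_simps eval_nat_numeral)
      also have "\<dots> \<le> 32 * (N^4*F) * (N^2 * F)"
        using mult_left_mono[OF NF, of "32*(N^4*F)"] Np F by simp
      also have "\<dots> = 32 * (N^6*F^2)" by (simp add: algebra_simps eval_nat_numeral)
      also have "\<dots> \<le> 10^9 * (N^6*F^2 + N^2)"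
      proof -
        have "\<And>X Y::real. 0 \<le> X \<Longrightarrow> 0 \<le> Y \<Longrightarrow> 32 * X \<le> 1000000000 * (X + Y)" by (simp add: algebra_simps)
        then show ?thesis unfolding e using N1 by blast
      qed
      finally show ?thesis .
    next
      case False
      have "V * (N^8*F^7 + F^3) \<le> V * (2 * F^3)" using False Vp by (intro mult_left_mono) auto
      also have "\<dots> \<le> l/(3*F^3) * (2 * F^3)" using VB F by (intro mult_right_mono) auto
      also have "\<dots> = 2/3 * l" using F by (simp add: field_simps)
      also have "\<dots> \<le> 2/3 * (2 * N^2)" using l2 by simp
      also have "\<dots> \<le> 10^9 * (N^6*F^2 + N^2)"
      proof -
        have "\<And>X Y::real. 0 \<le> X \<Longrightarrow> 0 \<le> Y \<Longrightarrow> 2/3 * (2 * Y) \<le> 1000000000 * (X + Y)" by (simp add: algebra_simps)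
        then show ?thesis unfolding e using N1 by blast
      qed
      finally show ?thesis .
    qed
  qed
qed

lemma arith_k2:
  fixes N F l V :: real
  assumes N: "2 \<le> N" and F: "0 < F" and l1: "N^2/4 \<le> l" and l2: "l \<le> N^2"
    and VA: "V \<le> 8/(l^2*F^6)" and VB: "V \<le> l^2/(2*F^2)"
  shows "V \<le> 10^9 * ((N^10*F^3 + N^4)/(N^14*F^9 + F^2))"
proof (rule fin_div)
  have Np: "0 < N" using N by auto
  have lp: "0 < l" using l1 Np by (smt (verit) divide_pos_pos zero_less_power)
  show "0 < N^14*F^9 + F^2" using Np F by (intro add_pos_pos) auto
  have N1: "0 \<le> N^10*F^3" "0 \<le> N^4" using Np F by auto
  have e: "(10::real)^9 = 1000000000" by simp
  show "V * (N^14*F^9 + F^2) \<le> 10^9 * (N^10*F^3 + N^4)"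
  proof (cases "V \<le> 0")
    case True
    have "V * (N^14*F^9 + F^2) \<le> 0" using True Np F by (intro mult_nonpos_nonneg) auto
    also have "0 \<le> (10::real)^9 * (N^10*F^3 + N^4)" using Np F by auto
    finally show ?thesis .
  next
    case False
    then have Vp: "0 < V" by simp
    show ?thesis
    proof (cases "F^2 \<le> N^14*F^9")
      case True
      have lsq: "N^4/16 \<le> l^2"
      proof -
        have "(N^2/4)^2 \<le> l^2" by (rule power_mono[OF l1]) (use Np in auto)
        moreover have "(N^2/4)^2 = N^4/16" by (simp add: power_divide flip: power_mult)
        ultimately show ?thesis by simp
      qed
      have "V \<le> 8/(l^2*F^6)" by (rule VA)
      also have "\<dots> \<le> 8/((N^4/16)*F^6)"
        by (intro divide_left_mono mult_right_mono lsq) (use Np F lp in auto)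
      also have "\<dots> = 128/(N^4*F^6)" using Np F by (simp add: field_simps)
      finally have V1: "V \<le> 128/(N^4*F^6)" .
      have "V * (N^14*F^9 + F^2) \<le> V * (2 * (N^14*F^9))" using True Vp by (intro mult_left_mono) (auto simp: mult.commute)
      also have "\<dots> \<le> 128/(N^4*F^6) * (2 * (N^14*F^9))" using V1 Np F by (intro mult_right_mono) auto
      also have "\<dots> = 256 * (N^10*F^3)" using Np F by (simp add: field_simps eval_nat_numeral)
      also have "\<dots> \<le> 10^9 * (N^10*F^3 + N^4)"
      proof -
        have "\<And>X Y::real. 0 \<le> X \<Longrightarrow> 0 \<le> Y \<Longrightarrow> 256 * X \<le> 1000000000 * (X + Y)" by (simp add: algebra_simps)
        then show ?thesis unfolding e using N1 by blast
      qed
      finally show ?thesis .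
    next
      case False
      have "V * (N^14*F^9 + F^2) \<le> V * (2 * F^2)" using False Vp by (intro mult_left_mono) auto
      also have "\<dots> \<le> l^2/(2*F^2) * (2 * F^2)" using VB F by (intro mult_right_mono) auto
      also have "\<dots> = l^2" using F by (simp add: field_simps)
      also have "\<dots> \<le> (N^2)^2" using l2 lp by (intro power_mono) auto
      also have "\<dots> = N^4" by (simp flip: power_mult)
      also have "\<dots> \<le> 10^9 * (N^10*F^3 + N^4)"
      proof -
        have "\<And>X Y::real. 0 \<le> X \<Longrightarrow> 0 \<le> Y \<Longrightarrow> Y \<le> 1000000000 * (X + Y)" by (simp add: algebra_simps)
        then show ?thesis unfolding e using N1 by blast
      qed
      finally show ?thesis .
    qed
  qed
qed



lemma choose2_real: "2 * real (n choose 2) = real n * (real n - 1)"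
proof (cases "n = 0")
  case False
  have ev: "even (n * (n - 1))" by (cases "even n") auto
  have "2 * (n choose 2) = n * (n - 1)" using ev by (simp add: choose_two)
  then have "real (2 * (n choose 2)) = real (n * (n - 1))" by simp
  then show ?thesis using False by (simp add: of_nat_diff)
qed simp

lemma rate_bounds:
  assumes n: "2 \<le> n" and k: "1 \<le> k"
  shows "real n^2/(2*real k) \<le> rateZ n k" "rateZ n k \<le> 2*real n^2/real k"
proof -
  define N where "N = real n"
  define K where "K = real k"
  have N: "2 \<le> N" using n by (simp add: N_def)
  have K: "1 \<le> K" using k by (simp add: K_def)
  have e2: "2 \<le> exp (1::real)" using exp_ge_add_one_self[of 1] by simp
  have e3: "exp (1::real) \<le> 3" by (rule exp_le)
  have r: "rateZ n k = (exp 1 * (N * (N - 1)) / 2) / K"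
  proof -
    have "real (n choose 2) = N * (N - 1) / 2" using choose2_real[of n] by (simp add: N_def)
    then show ?thesis unfolding rateZ_def K_def by (simp only:)
  qed
  have "N^2 \<le> exp 1 * (N * (N - 1))"
  proof -
    have "N \<le> 2 * (N - 1)" using N by simp
    also have "\<dots> \<le> exp 1 * (N - 1)" using e2 N by (intro mult_right_mono) auto
    finally have "N * N \<le> N * (exp 1 * (N - 1))" using N by (intro mult_left_mono) auto
    then show ?thesis by (simp add: power2_eq_square algebra_simps)
  qed
  then have "N^2 / 2 / K \<le> (exp 1 * (N * (N - 1)) / 2) / K"
    using K by (intro divide_right_mono) auto
  then show "real n^2/(2*real k) \<le> rateZ n k" unfolding r by (simp add: N_def K_def field_simps)
  have "exp 1 * (N * (N - 1)) \<le> 3 * (N * N)"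
    using e3 N by (intro mult_mono) auto
  then have "exp 1 * (N * (N - 1)) \<le> 4 * (N * N)" using N by (smt (verit) mult_nonneg_nonneg)
  then have "(exp 1 * (N * (N - 1)) / 2) / K \<le> (2 * N^2) / K"
    using K by (intro divide_right_mono) (auto simp: power2_eq_square)
  then show "rateZ n k \<le> 2*real n^2/real k" unfolding r by (simp add: N_def K_def)
qed

lemma Fsum_pos:
  assumes f1: "0 < f 1" and mono: "\<forall>i j. 1 \<le> i \<and> i \<le> j \<and> j \<le> n \<longrightarrow> f i \<le> f j"
    and j: "1 \<le> j" "j \<le> n"
  shows "0 < Fsum f j"
proof -
  have nn: "\<forall>x\<in>{1..j} - {1}. 0 \<le> f x"
  proof
    fix x assume "x \<in> {1..j} - {1}"
    then have "f 1 \<le> f x" using mono j by auto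
    then show "0 \<le> f x" using f1 by simp
  qed
  have "f 1 \<le> (\<Sum>i = 1..j. f i)" by (rule member_le_sum) (use j nn in auto)
  then show ?thesis unfolding Fsum_def using f1 by simp
qed



lemma per_k:
  assumes n: "2 \<le> n" and f1: "0 < f 1" and mono: "\<forall>i j. 1 \<le> i \<and> i \<le> j \<and> j \<le> n \<longrightarrow> f i \<le> f j"
    and k: "1 \<le> k" "k \<le> n - 1"
  shows "0 < Fsum f (n - k)" "real n^2/(2*real k) \<le> rateZ n k" "rateZ n k \<le> 2*real n^2/real k"
    "0 < rateZ n k"
    "varX n f k \<le> 4 * real k / (rateZ n k ^ 2 * Fsum f (n - k) ^ 6)"
    "7 \<le> k \<Longrightarrow> varX n f k \<le> 8 * (6 * 7^6 + 1) * rateZ n k ^ 4 / real k ^ 5"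
    "4 \<le> k \<Longrightarrow> varX n f k \<le> rateZ n k ^ 3 / Fsum f (n - k)"
    "k \<le> 3 \<Longrightarrow> varX n f k \<le> rateZ n k ^ k / fact (k - 1) * (1 / ((real (5 - k) - 1) * Fsum f (n - k) ^ (5 - k - 1)))"
proof -
  show F: "0 < Fsum f (n - k)" by (rule Fsum_pos[OF f1 mono]) (use k n in auto)
  show l1: "real n^2/(2*real k) \<le> rateZ n k" and "rateZ n k \<le> 2*real n^2/real k"
    using rate_bounds[OF n k(1)] by auto
  show l: "0 < rateZ n k"
    by (rule less_le_trans[OF _ l1]) (use n k in auto)
  show "varX n f k \<le> 4 * real k / (rateZ n k ^ 2 * Fsum f (n - k) ^ 6)"
    unfolding varX_def by (rule bound_A[OF k(1) l F])
  show "7 \<le> k \<Longrightarrow> varX n f k \<le> 8 * (6 * 7^6 + 1) * rateZ n k ^ 4 / real k ^ 5"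
    unfolding varX_def by (rule bound_Bbig[OF _ l F])
  show "4 \<le> k \<Longrightarrow> varX n f k \<le> rateZ n k ^ 3 / Fsum f (n - k)"
    unfolding varX_def by (rule bound_Bmid[OF _ l F])
  show "k \<le> 3 \<Longrightarrow> varX n f k \<le> rateZ n k ^ k / fact (k - 1) * (1 / ((real (5 - k) - 1) * Fsum f (n - k) ^ (5 - k - 1)))"
    unfolding varX_def by (rule bound_Bsmall[OF k(1) _ l F])
qed

theorem lemma15:
  shows "\<exists>C>0. \<forall>(n::nat) (f::nat \<Rightarrow> real).
     n \<ge> 2 \<and> 0 < f 1 \<and> (\<forall>i j. 1 \<le> i \<and> i \<le> j \<and> j \<le> n \<longrightarrow> f i \<le> f j) \<longrightarrow>
       (\<forall>k\<in>{3..n-1}.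
          varX n f k \<le> C * ((real k ^ 3 * real n ^ 12 * Fsum f (n - k) ^ 3 + real k ^ 9 * real n ^ 6)
                     / (real n ^ 16 * Fsum f (n - k) ^ 9 + real k ^ 16 * Fsum f (n - k))))
       \<and> varX n f 1 \<le> C * ((real n ^ 6 * Fsum f (n - 1) ^ 2 + real n ^ 2)
                     / (real n ^ 8 * Fsum f (n - 1) ^ 7 + Fsum f (n - 1) ^ 3))
       \<and> (3 \<le> n \<longrightarrow> varX n f 2 \<le> C * ((real n ^ 10 * Fsum f (n - 2) ^ 3 + real n ^ 4)
                     / (real n ^ 14 * Fsum f (n - 2) ^ 9 + Fsum f (n - 2) ^ 2)))"
proof (intro exI[of _ "10^9"] conjI allI impI ballI)
  show "0 < (10::real)^9" by simp
next
  fix n :: nat and f :: "nat \<Rightarrow> real" and k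
  assume H: "2 \<le> n \<and> 0 < f 1 \<and> (\<forall>i j. 1 \<le> i \<and> i \<le> j \<and> j \<le> n \<longrightarrow> f i \<le> f j)"
    and kk: "k \<in> {3..n-1}"
  have n: "2 \<le> n" and f1: "0 < f 1" and mono: "\<forall>i j. 1 \<le> i \<and> i \<le> j \<and> j \<le> n \<longrightarrow> f i \<le> f j"
    using H by auto
  have k: "1 \<le> k" "k \<le> n - 1" "3 \<le> k" using kk by auto
  note P = per_k[OF n f1 mono k(1,2)]
  have VB: "(7 \<le> real k \<and> varX n f k \<le> 8 * (6 * 7^6 + 1) * rateZ n k ^ 4 / real k ^ 5) \<or>
            (real k \<le> 6 \<and> varX n f k \<le> rateZ n k ^ 3 / Fsum f (n - k))"
  proof (cases "7 \<le> k")
    case True then show ?thesis using P(6) by auto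
  next
    case False
    then have k6: "real k \<le> 6" by simp
    show ?thesis
    proof (cases "4 \<le> k")
      case True then show ?thesis using P(7) k6 by auto
    next
      case False
      then have k3: "k = 3" using k by simp
      have "varX n f k \<le> rateZ n k ^ 3 / 2 * (1 / Fsum f (n - k))"
        using P(8) k3 by (simp add: numeral_eq_Suc)
      also have "\<dots> \<le> rateZ n k ^ 3 / Fsum f (n - k)"
        using P(1,4) by (simp add: field_simps)
      finally show ?thesis using k6 by auto
    qed
  qed
  show "varX n f k \<le> 10^9 * ((real k ^ 3 * real n ^ 12 * Fsum f (n - k) ^ 3 + real k ^ 9 * real n ^ 6)
                     / (real n ^ 16 * Fsum f (n - k) ^ 9 + real k ^ 16 * Fsum f (n - k)))"
    by (rule arith_k3[OF _ _ P(1) P(2) P(3) P(5) VB]) (use k n in auto)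
next
  fix n :: nat and f :: "nat \<Rightarrow> real"
  assume H: "2 \<le> n \<and> 0 < f 1 \<and> (\<forall>i j. 1 \<le> i \<and> i \<le> j \<and> j \<le> n \<longrightarrow> f i \<le> f j)"
  have n: "2 \<le> n" and f1: "0 < f 1" and mono: "\<forall>i j. 1 \<le> i \<and> i \<le> j \<and> j \<le> n \<longrightarrow> f i \<le> f j"
    using H by auto
  note P = per_k[OF n f1 mono, of 1]
  show "varX n f 1 \<le> 10^9 * ((real n ^ 6 * Fsum f (n - 1) ^ 2 + real n ^ 2)
                     / (real n ^ 8 * Fsum f (n - 1) ^ 7 + Fsum f (n - 1) ^ 3))"
  proof (rule arith_k1)
    show "2 \<le> real n" using n by simp
    show "0 < Fsum f (n - 1)" using P(1) n by simp
    show "real n ^ 2 / 2 \<le> rateZ n 1" using P(2) n by simp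
    show "rateZ n 1 \<le> 2 * real n ^ 2" using P(3) n by simp
    show "varX n f 1 \<le> 4 / (rateZ n 1 ^ 2 * Fsum f (n - 1) ^ 6)" using P(5) n by simp
    show "varX n f 1 \<le> rateZ n 1 / (3 * Fsum f (n - 1) ^ 3)" using P(8) n by (simp add: numeral_eq_Suc)
  qed
next
  fix n :: nat and f :: "nat \<Rightarrow> real"
  assume H: "2 \<le> n \<and> 0 < f 1 \<and> (\<forall>i j. 1 \<le> i \<and> i \<le> j \<and> j \<le> n \<longrightarrow> f i \<le> f j)"
    and n3: "3 \<le> n"
  have n: "2 \<le> n" and f1: "0 < f 1" and mono: "\<forall>i j. 1 \<le> i \<and> i \<le> j \<and> j \<le> n \<longrightarrow> f i \<le> f j"
    using H by auto
  note P = per_k[OF n f1 mono, of 2]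
  show "varX n f 2 \<le> 10^9 * ((real n ^ 10 * Fsum f (n - 2) ^ 3 + real n ^ 4)
                     / (real n ^ 14 * Fsum f (n - 2) ^ 9 + Fsum f (n - 2) ^ 2))"
  proof (rule arith_k2)
    show "2 \<le> real n" using n by simp
    show "0 < Fsum f (n - 2)" using P(1) n3 by simp
    show "real n ^ 2 / 4 \<le> rateZ n 2" using P(2) n3 by simp
    show "rateZ n 2 \<le> real n ^ 2" using P(3) n3 by simp
    show "varX n f 2 \<le> 8 / (rateZ n 2 ^ 2 * Fsum f (n - 2) ^ 6)" using P(5) n3 by simp
    show "varX n f 2 \<le> rateZ n 2 ^ 2 / (2 * Fsum f (n - 2) ^ 2)" using P(8) n3 by (simp add: numeral_eq_Suc)
  qed
qed

end
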